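(* Let $G$ be a three-dimensional Lie group with Lie algebra $\mathfrak{g}$. Then $G$ admits a left-invariant contact form $\omega$ (with contact distribution $D=\ker\omega$) if and only if there exists a completely nonholonomic left-invariant rank two distribution $D$ on $G$ together with a left-invariant rank one distribution $D^{\perp}$ complementary to $D$ such that $[D^{\perp}(e),D(e)]\subset D(e)$; moreover, in this situation there exists a non-zero left-invariant $1$-form $\omega$ on $G$ with $\omega(D)=0$ (and it is a contact form).
   Context: A $1$-form $\omega$ on a $3$-manifold is contact if $\omega\wedge d\omega\neq 0$ everywhere. A distribution is completely nonholonomic if iterated Lie brackets of vector fields tangent to it span the whole tangent space at each point. Left-invariant distributions are identified with subspaces $D(e)\subset\mathfrak{g}$. *)

theory Defs
  imports "HOL-Analysis.Analysis"
begin

definition lie_bracket :: "('a::real_vector \<Rightarrow> 'a \<Rightarrow> 'a) \<Rightarrow> bool" where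
  "lie_bracket br \<longleftrightarrow> bilinear br \<and> (\<forall>x. br x x = 0) \<and>
     (\<forall>x y z. br x (br y z) + br y (br z x) + br z (br x y) = 0)"

text \<open>Iterated Lie brackets of elements of D (values at e of iterated brackets of
  left-invariant vector fields tangent to the left-invariant distribution D).\<close>
inductive_set iterated_brackets :: "('a \<Rightarrow> 'a \<Rightarrow> 'a) \<Rightarrow> 'a set \<Rightarrow> 'a set"
  for br :: "'a \<Rightarrow> 'a \<Rightarrow> 'a" and D :: "'a set" where
  base: "x \<in> D \<Longrightarrow> x \<in> iterated_brackets br D"
| brk: "x \<in> iterated_brackets br D \<Longrightarrow> y \<in> iterated_brackets br D \<Longrightarrow>
         br x y \<in> iterated_brackets br D"

definition completely_nonholonomic :: "('a::real_vector \<Rightarrow> 'a \<Rightarrow> 'a) \<Rightarrow> 'a set \<Rightarrow> bool" where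
  "completely_nonholonomic br D \<longleftrightarrow> span (iterated_brackets br D) = UNIV"

text \<open>Exterior derivative of a left-invariant 1-form omega (an element of g*):
  d omega (X,Y) = X(omega Y) - Y(omega X) - omega [X,Y] = - omega [X,Y].\<close>
definition d_form :: "('a \<Rightarrow> 'a \<Rightarrow> 'a) \<Rightarrow> ('a \<Rightarrow> real) \<Rightarrow> 'a \<Rightarrow> 'a \<Rightarrow> real" where
  "d_form br \<omega> X Y = - \<omega> (br X Y)"

definition wedge_d :: "('a \<Rightarrow> 'a \<Rightarrow> 'a) \<Rightarrow> ('a \<Rightarrow> real) \<Rightarrow> 'a \<Rightarrow> 'a \<Rightarrow> 'a \<Rightarrow> real" where
  "wedge_d br \<omega> X Y Z =
     \<omega> X * d_form br \<omega> Y Z + \<omega> Y * d_form br \<omega> Z X + \<omega> Z * d_form br \<omega> X Y"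

text \<open>Left-invariant contact form: a linear functional on g with omega wedge d omega
  non-zero (at e, hence everywhere by left-invariance).\<close>
definition contact_form :: "('a::real_vector \<Rightarrow> 'a \<Rightarrow> 'a) \<Rightarrow> ('a \<Rightarrow> real) \<Rightarrow> bool" where
  "contact_form br \<omega> \<longleftrightarrow> linear \<omega> \<and> (\<exists>X Y Z. wedge_d br \<omega> X Y Z \<noteq> 0)"

definition admissible_pair :: "('a::euclidean_space \<Rightarrow> 'a \<Rightarrow> 'a) \<Rightarrow> 'a set \<Rightarrow> 'a set \<Rightarrow> bool" where
  "admissible_pair br D L \<longleftrightarrow>
     subspace D \<and> dim D = 2 \<and> completely_nonholonomic br D \<and>
     subspace L \<and> dim L = 1 \<and> D \<inter> L = {0} \<and> {x + y |x y. x \<in> D \<and> y \<in> L} = UNIV \<and>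
     (\<forall>x\<in>L. \<forall>y\<in>D. br x y \<in> D)"

end

theory Submission
  imports Defs
begin

lemma br_bil: "lie_bracket br \<Longrightarrow> bilinear br"
  by (simp add: lie_bracket_def)

lemma br_alt: "lie_bracket br \<Longrightarrow> br x x = 0"
  by (simp add: lie_bracket_def)

lemma br_antisym:
  assumes "lie_bracket br" shows "br y x = - br x y"
proof -
  have b: "bilinear br" using assms by (rule br_bil)
  have "0 = br (x+y) (x+y)" using br_alt[OF assms] by simp
  also have "\<dots> = br x x + br x y + br y x + br y y"
    by (simp add: bilinear_ladd[OF b] bilinear_radd[OF b])
  finally show ?thesis using br_alt[OF assms, of x] br_alt[OF assms, of y]
    by (simp add: eq_neg_iff_add_eq_0 add.commute)
qed

lemma B_expand:
  assumes lb: "lie_bracket br" and lw: "linear \<omega>"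
  shows "\<omega> (br (p + a *\<^sub>R v) (q + b *\<^sub>R v)) =
     \<omega> (br p q) + b * \<omega> (br p v) - a * \<omega> (br q v)"
proof -
  have b: "bilinear br" using lb by (rule br_bil)
  have "br (p + a *\<^sub>R v) (q + b *\<^sub>R v) =
     br p q + b *\<^sub>R br p v + a *\<^sub>R br v q + (a*b) *\<^sub>R br v v"
    by (simp add: bilinear_ladd[OF b] bilinear_radd[OF b] bilinear_lmul[OF b]
        bilinear_rmul[OF b] algebra_simps)
  also have "\<dots> = br p q + b *\<^sub>R br p v - a *\<^sub>R br q v"
    using br_alt[OF lb, of v] br_antisym[OF lb, of v q] by simp
  finally show ?thesis
    by (simp add: linear_add[OF lw] linear_diff[OF lw] linear_scale[OF lw])
qed

lemma iter_sub:
  assumes "\<And>x y. x \<in> D \<Longrightarrow> y \<in> D \<Longrightarrow> br x y \<in> D"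
  shows "iterated_brackets br D \<subseteq> D"
proof
  fix x assume "x \<in> iterated_brackets br D"
  then show "x \<in> D" by induction (auto intro: assms)
qed

lemma admissible_contact:
  fixes br :: "'a::euclidean_space \<Rightarrow> 'a \<Rightarrow> 'a"
  assumes "DIM('a) = 3" and lb: "lie_bracket br" and ad: "admissible_pair br D L"
  shows "\<exists>\<omega>. linear \<omega> \<and> \<omega> \<noteq> (\<lambda>_. 0) \<and> (\<forall>x\<in>D. \<omega> x = 0) \<and> contact_form br \<omega>"
proof -
  have sD: "subspace D" and dD: "dim D = 2" and cn: "completely_nonholonomic br D"
    using ad by (auto simp: admissible_pair_def)
  obtain n :: 'a where n0: "n \<noteq> 0" and no: "\<And>y. y \<in> span D \<Longrightarrow> orthogonal n y"
    using orthogonal_to_subspace_exists[of D] dD assms(1) by auto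
  define \<omega> where "\<omega> = (\<lambda>x. n \<bullet> x)"
  have lw: "linear \<omega>" unfolding \<omega>_def by (rule linearI) (simp_all add: inner_add_right)
  have Dz: "\<forall>x\<in>D. \<omega> x = 0" using no span_base unfolding \<omega>_def orthogonal_def by blast
  have wn: "\<omega> n \<noteq> 0" using n0 unfolding \<omega>_def by simp
  define E where "E = {x. \<omega> x = 0}"
  have sE: "subspace E" unfolding E_def \<omega>_def
    by (simp add: subspace_def inner_right_distrib)
  have DE: "D \<subseteq> E" using Dz E_def by auto
  have "span E \<noteq> UNIV" using wn E_def sE span_eq_iff by (metis UNIV_I mem_Collect_eq)
  then have "dim E \<noteq> DIM('a)" using dim_eq_full by metis
  moreover have "dim E \<le> DIM('a)" by (metis dim_subset_UNIV dim_UNIV)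
  ultimately have "dim E \<le> dim D" using dD assms(1) by simp
  then have ED: "E = D" using subspace_dim_equal[OF sD sE DE] by simp
  have "\<exists>X\<in>D. \<exists>Y\<in>D. \<omega> (br X Y) \<noteq> 0"
  proof (rule ccontr)
    assume "\<not> ?thesis"
    then have "\<And>x y. x \<in> D \<Longrightarrow> y \<in> D \<Longrightarrow> br x y \<in> D" using ED E_def by auto
    then have "span (iterated_brackets br D) \<subseteq> D"
      using iter_sub sD by (metis span_minimal)
    then have "D = UNIV" using cn completely_nonholonomic_def by auto
    then show False using ED E_def wn by auto
  qed
  then obtain X Y where XY: "X \<in> D" "Y \<in> D" "\<omega> (br X Y) \<noteq> 0" by blast
  have "wedge_d br \<omega> n X Y \<noteq> 0"
    using XY Dz wn by (simp add: wedge_d_def d_form_def)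
  then have "contact_form br \<omega>" using lw contact_form_def by blast
  moreover have "\<omega> \<noteq> (\<lambda>_. 0)" using wn by auto
  ultimately show ?thesis using lw Dz by blast
qed

lemma contact_admissible:
  fixes br :: "'a::euclidean_space \<Rightarrow> 'a \<Rightarrow> 'a"
  assumes d3: "DIM('a) = 3" and lb: "lie_bracket br" and cf: "contact_form br \<omega>"
  shows "\<exists>D L. admissible_pair br D L"
proof -
  have bb: "bilinear br" using lb by (rule br_bil)
  have lw: "linear \<omega>" using cf contact_form_def by blast
  obtain P Q R where W: "wedge_d br \<omega> P Q R \<noteq> 0" using cf contact_form_def by blast
  obtain u where u: "\<omega> u \<noteq> 0"
    using W unfolding wedge_d_def by (metis add.right_neutral mult_zero_left)
  define v where "v = (1 / \<omega> u) *\<^sub>R u"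
  have wv: "\<omega> v = 1" using u unfolding v_def by (simp add: linear_scale[OF lw])
  define D where "D = {x. \<omega> x = 0}"
  have sD: "subspace D" unfolding D_def subspace_def
    by (simp add: linear_0[OF lw] linear_add[OF lw] linear_scale[OF lw])
  have proj: "x - \<omega> x *\<^sub>R v \<in> D" for x
    unfolding D_def using wv by (simp add: linear_diff[OF lw] linear_scale[OF lw])
  have decomp: "x = (x - \<omega> x *\<^sub>R v) + \<omega> x *\<^sub>R v" for x by simp
  have "\<exists>X\<in>D. \<exists>Y\<in>D. \<omega> (br X Y) \<noteq> 0"
  proof (rule ccontr)
    assume "\<not> ?thesis"
    then have Z: "\<And>x y. x \<in> D \<Longrightarrow> y \<in> D \<Longrightarrow> \<omega> (br x y) = 0" by blast
    define p where "p = P - \<omega> P *\<^sub>R v"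
    define q where "q = Q - \<omega> Q *\<^sub>R v"
    define r where "r = R - \<omega> R *\<^sub>R v"
    have pD: "p \<in> D" "q \<in> D" "r \<in> D" unfolding p_def q_def r_def using proj by auto
    have E: "\<omega> (br (x + a *\<^sub>R v) (y + b *\<^sub>R v)) = b * \<omega> (br x v) - a * \<omega> (br y v)"
      if "x \<in> D" "y \<in> D" for x y a b
      using B_expand[OF lb lw, of x a v y b] Z[OF that] by simp
    have P: "P = p + \<omega> P *\<^sub>R v" and Q: "Q = q + \<omega> Q *\<^sub>R v" and R: "R = r + \<omega> R *\<^sub>R v"
      unfolding p_def q_def r_def by simp_all
    have "wedge_d br \<omega> P Q R =
      \<omega> P * - \<omega> (br (q + \<omega> Q *\<^sub>R v) (r + \<omega> R *\<^sub>R v)) +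
      \<omega> Q * - \<omega> (br (r + \<omega> R *\<^sub>R v) (p + \<omega> P *\<^sub>R v)) +
      \<omega> R * - \<omega> (br (p + \<omega> P *\<^sub>R v) (q + \<omega> Q *\<^sub>R v))"
      unfolding wedge_d_def d_form_def using P Q R by simp
    also have "\<dots> = 0" unfolding E[OF pD(2) pD(3)] E[OF pD(3) pD(1)] E[OF pD(1) pD(2)]
      by (simp add: algebra_simps)
    finally show False using W by simp
  qed
  then obtain X Y where XD: "X \<in> D" and YD: "Y \<in> D" and k: "\<omega> (br X Y) \<noteq> 0" by blast
  define k where "k = \<omega> (br X Y)"
  have k0: "k \<noteq> 0" using k k_def by simp
  have X0: "X \<noteq> 0" using k bilinear_lzero[OF bb, of Y] linear_0[OF lw] by auto
  have Yns: "Y \<notin> span {X}"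
  proof
    assume "Y \<in> span {X}"
    then obtain t where "Y = t *\<^sub>R X" by (auto simp: span_singleton)
    then have "br X Y = 0" by (simp add: bilinear_rmul[OF bb] br_alt[OF lb])
    then show False using k by (simp add: linear_0[OF lw])
  qed
  have XY: "X \<noteq> Y" using Yns span_base[of X "{X}"] by auto
  have ind: "independent {Y, X}"
    by (rule independent_insertI[OF Yns]) (simp add: X0)
  have cardXY: "card {Y, X} = 2" using XY by simp
  have vD: "v \<notin> D" using wv D_def by simp
  have "span D \<noteq> UNIV" using vD sD span_eq_iff by (metis UNIV_I)
  then have "dim D \<noteq> DIM('a)" using dim_eq_full by metis
  moreover have "dim D \<le> DIM('a)" by (metis dim_subset_UNIV dim_UNIV)
  moreover have "2 \<le> dim D" using independent_card_le_dim[of "{Y,X}" D] ind XD YD cardXY by simp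
  ultimately have dD: "dim D = 2" using d3 by simp
  have Dspan: "D \<subseteq> span {Y, X}"
    using card_eq_dim[of "{Y,X}" D] ind XD YD cardXY dD by simp
  define a where "a = - \<omega> (br v Y) / k"
  define b where "b = \<omega> (br v X) / k"
  define \<xi> where "\<xi> = v + a *\<^sub>R X + b *\<^sub>R Y"
  have brl: "br \<xi> z = br v z + a *\<^sub>R br X z + b *\<^sub>R br Y z" for z
    unfolding \<xi>_def by (simp add: bilinear_ladd[OF bb] bilinear_lmul[OF bb])
  have wbrl: "\<omega> (br \<xi> z) = \<omega> (br v z) + a * \<omega> (br X z) + b * \<omega> (br Y z)" for z
    by (simp add: brl linear_add[OF lw] linear_scale[OF lw])
  have YX: "\<omega> (br Y X) = - k" using k_def br_antisym[OF lb, of X Y] by (simp add: linear_neg[OF lw])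
  have xX: "\<omega> (br \<xi> X) = 0" using wbrl[of X] YX k0
    by (simp add: br_alt[OF lb] linear_0[OF lw] b_def)
  have xY: "\<omega> (br \<xi> Y) = 0" using wbrl[of Y] k0
    by (simp add: br_alt[OF lb] linear_0[OF lw] a_def k_def[symmetric])
  have sK: "subspace {z. \<omega> (br \<xi> z) = 0}" unfolding subspace_def
    by (simp add: bilinear_rzero[OF bb] bilinear_radd[OF bb] bilinear_rmul[OF bb]
        linear_0[OF lw] linear_add[OF lw] linear_scale[OF lw])
  have "span {Y, X} \<subseteq> {z. \<omega> (br \<xi> z) = 0}"
    by (rule span_minimal) (use xX xY sK in auto)
  then have xD: "\<And>y. y \<in> D \<Longrightarrow> \<omega> (br \<xi> y) = 0" using Dspan by auto
  have wx: "\<omega> \<xi> = 1" using XD YD wv unfolding \<xi>_def D_def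
    by (simp add: linear_add[OF lw] linear_scale[OF lw])
  have x0: "\<xi> \<noteq> 0" using wx by (auto simp: linear_0[OF lw])
  define L where "L = span {\<xi>}"
  have Lform: "x \<in> L \<longleftrightarrow> (\<exists>t. x = t *\<^sub>R \<xi>)" for x
    unfolding L_def span_singleton by auto
  have sL: "subspace L" unfolding L_def by simp
  have dL: "dim L = 1" unfolding L_def using x0 by simp
  have DL: "D \<inter> L = {0}"
  proof
    show "D \<inter> L \<subseteq> {0}"
    proof
      fix x assume "x \<in> D \<inter> L"
      then obtain t where "x = t *\<^sub>R \<xi>" "\<omega> x = 0" using Lform D_def by auto
      then show "x \<in> {0}" using wx by (simp add: linear_scale[OF lw])
    qed
    show "{0} \<subseteq> D \<inter> L" using sD sL by (simp add: subspace_0)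
  qed
  have sum: "{x + y |x y. x \<in> D \<and> y \<in> L} = UNIV"
  proof -
    have "z \<in> {x + y |x y. x \<in> D \<and> y \<in> L}" for z
    proof -
      have "z - \<omega> z *\<^sub>R \<xi> \<in> D" using wx unfolding D_def
        by (simp add: linear_diff[OF lw] linear_scale[OF lw])
      moreover have "\<omega> z *\<^sub>R \<xi> \<in> L" using Lform by auto
      ultimately show ?thesis by force
    qed
    then show ?thesis by auto
  qed
  have brk: "\<forall>x\<in>L. \<forall>y\<in>D. br x y \<in> D"
  proof (intro ballI)
    fix x y assume "x \<in> L" "y \<in> D"
    then obtain t where "x = t *\<^sub>R \<xi>" using Lform by auto
    then show "br x y \<in> D" using xD[OF \<open>y \<in> D\<close>] unfolding D_def
      by (simp add: bilinear_lmul[OF bb] linear_scale[OF lw])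
  qed
  have cn: "completely_nonholonomic br D"
    unfolding completely_nonholonomic_def
  proof -
    let ?I = "iterated_brackets br D"
    have XI: "X \<in> ?I" "Y \<in> ?I" using XD YD by (auto intro: iterated_brackets.base)
    have BI: "br X Y \<in> ?I" using XI by (rule iterated_brackets.brk)
    have DI: "D \<subseteq> span ?I"
      using Dspan span_mono[of "{Y,X}" ?I] XI by auto
    have "z \<in> span ?I" for z
    proof -
      have "z - (\<omega> z / k) *\<^sub>R br X Y \<in> D" unfolding D_def using k0
        by (simp add: linear_diff[OF lw] linear_scale[OF lw] k_def)
      then have "z - (\<omega> z / k) *\<^sub>R br X Y \<in> span ?I" using DI by auto
      moreover have "(\<omega> z / k) *\<^sub>R br X Y \<in> span ?I"
        using BI by (simp add: span_base span_scale)
      ultimately have "(z - (\<omega> z / k) *\<^sub>R br X Y) + (\<omega> z / k) *\<^sub>R br X Y \<in> span ?I"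
        by (rule span_add)
      then show ?thesis by simp
    qed
    then show "span ?I = UNIV" by auto
  qed
  have "admissible_pair br D L"
    unfolding admissible_pair_def using sD dD cn sL dL DL sum brk by blast
  then show ?thesis by blast
qed

theorem proposition1:
  fixes br :: "'a::euclidean_space \<Rightarrow> 'a \<Rightarrow> 'a"
  assumes "DIM('a) = 3"
    and "lie_bracket br"
  shows "((\<exists>\<omega>. contact_form br \<omega>) \<longleftrightarrow> (\<exists>D L. admissible_pair br D L)) \<and>
         (\<forall>D L. admissible_pair br D L \<longrightarrow>
            (\<exists>\<omega>. linear \<omega> \<and> \<omega> \<noteq> (\<lambda>_. 0) \<and> (\<forall>x\<in>D. \<omega> x = 0) \<and> contact_form br \<omega>))"
  using contact_admissible[OF assms] admissible_contact[OF assms] by blast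

end
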